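(* Let $K$ be a compact symmetric subset of $\mathbb{R}^m$ containing $0$, of Euclidean diameter at most $\varepsilon$, and let $\hat K$ be its convex hull. For $n\in\mathbb N$ let $K^n=\{k_1+\dots+k_n : k_i\in K\}$. Then for every $n\in\mathbb N$, the Gromov–Hausdorff distance between $K^n$ and its convex hull, both equipped with the Euclidean distance, is at most $(m+1)\varepsilon$. *)

theory Defs
  imports "HOL-Analysis.Analysis"
begin

definition minkowski_power :: "nat \<Rightarrow> 'a::comm_monoid_add set \<Rightarrow> 'a set" where
  "minkowski_power n K = {(\<Sum>i<n. k i) | k. \<forall>i<n. k i \<in> K}"

definition metric_on :: "'a set \<Rightarrow> ('a \<Rightarrow> 'a \<Rightarrow> real) \<Rightarrow> bool" where
  "metric_on S d \<longleftrightarrow>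
     (\<forall>x\<in>S. \<forall>y\<in>S. 0 \<le> d x y \<and> (d x y = 0 \<longleftrightarrow> x = y) \<and> d x y = d y x) \<and>
     (\<forall>x\<in>S. \<forall>y\<in>S. \<forall>z\<in>S. d x z \<le> d x y + d y z)"

definition hausdorff_dist_wrt :: "('a \<Rightarrow> 'a \<Rightarrow> real) \<Rightarrow> 'a set \<Rightarrow> 'a set \<Rightarrow> real" where
  "hausdorff_dist_wrt d A B =
     max (SUP a\<in>A. INF b\<in>B. d a b) (SUP b\<in>B. INF a\<in>A. d a b)"

definition GH_dist :: "'a::metric_space set \<Rightarrow> 'b::metric_space set \<Rightarrow> real" where
  "GH_dist X Y = (INF d\<in>{d. metric_on (Inl ` X \<union> Inr ` Y) d \<and>
                          (\<forall>x\<in>X. \<forall>x'\<in>X. d (Inl x) (Inl x') = dist x x') \<and>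
                          (\<forall>y\<in>Y. \<forall>y'\<in>Y. d (Inr y) (Inr y') = dist y y')}.
                  hausdorff_dist_wrt d (Inl ` X) (Inr ` Y))"

end

theory Submission
  imports Defs
begin

lemma mp_0: "minkowski_power 0 K = {0}"
  by (auto simp: minkowski_power_def)

lemma mp_Suc: "x \<in> minkowski_power (Suc n) K \<longleftrightarrow> (\<exists>y\<in>minkowski_power n K. \<exists>k\<in>K. x = y + k)"
proof
  assume "x \<in> minkowski_power (Suc n) K"
  then obtain k where x: "x = (\<Sum>i<Suc n. k i)" "\<forall>i<Suc n. k i \<in> K"
    unfolding minkowski_power_def by auto
  have "(\<Sum>i<n. k i) \<in> minkowski_power n K" using x(2) unfolding minkowski_power_def by auto
  moreover have "k n \<in> K" using x(2) by auto
  ultimately show "\<exists>y\<in>minkowski_power n K. \<exists>k\<in>K. x = y + k" using x(1) by auto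
next
  assume "\<exists>y\<in>minkowski_power n K. \<exists>k\<in>K. x = y + k"
  then obtain y k' where y: "y \<in> minkowski_power n K" "k' \<in> K" "x = y + k'" by auto
  then obtain k where k: "y = (\<Sum>i<n. k i)" "\<forall>i<n. k i \<in> K"
    unfolding minkowski_power_def by auto
  define k2 where "k2 = k(n := k')"
  have "(\<Sum>i<n. k2 i) = (\<Sum>i<n. k i)" by (rule sum.cong) (auto simp: k2_def)
  hence "x = (\<Sum>i<Suc n. k2 i)" using y k by (simp add: k2_def)
  moreover have "\<forall>i<Suc n. k2 i \<in> K" using k y by (auto simp: k2_def less_Suc_eq)
  ultimately show "x \<in> minkowski_power (Suc n) K" unfolding minkowski_power_def by blast
qed

lemma mp_add: "x \<in> minkowski_power a K \<Longrightarrow> y \<in> minkowski_power b K \<Longrightarrow> x + y \<in> minkowski_power (a + b) K"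
proof (induction b arbitrary: y)
  case 0 then show ?case by (simp add: mp_0)
next
  case (Suc b)
  then obtain y' k where y': "y' \<in> minkowski_power b K" "k \<in> K" "y = y' + k" by (auto simp: mp_Suc)
  have "x + y' \<in> minkowski_power (a + b) K" using Suc.IH[OF Suc.prems(1) y'(1)] by auto
  then show ?case unfolding mp_Suc add_Suc_right using \<open>k \<in> K\<close> \<open>y = y' + k\<close>
    by (metis add.assoc)
qed

lemma mp_zero: "0 \<in> K \<Longrightarrow> 0 \<in> minkowski_power n K"
  by (induction n) (auto simp: mp_0 mp_Suc intro!: bexI[of _ 0])

lemma mp_mono: "0 \<in> K \<Longrightarrow> x \<in> minkowski_power a K \<Longrightarrow> a \<le> b \<Longrightarrow> x \<in> minkowski_power b K"
  using mp_add[of x a K 0 "b - a"] mp_zero[of K "b - a"] by simp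

lemma mp_scale: "(k::'a::real_vector) \<in> K \<Longrightarrow> real c *\<^sub>R k \<in> minkowski_power c K"
proof (induction c)
  case 0 then show ?case by (simp add: mp_0)
next
  case (Suc c)
  have "real (Suc c) *\<^sub>R k = real c *\<^sub>R k + k" by (simp add: algebra_simps)
  then show ?case using Suc unfolding mp_Suc by blast
qed

lemma mp_sum:
  fixes K :: "'a::real_vector set"
  shows "finite s \<Longrightarrow> s \<subseteq> K \<Longrightarrow> (\<Sum>x\<in>s. real (a x) *\<^sub>R x) \<in> minkowski_power (sum a s) K"
proof (induction s rule: finite_induct)
  case empty then show ?case by (simp add: mp_0)
next
  case (insert x F)
  then show ?case using mp_add[OF mp_scale[of x K "a x"], of _ "sum a F"] by auto
qed

lemma mp_sub_hull:
  fixes K :: "'a::real_vector set"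
  assumes "K \<noteq> {}"
  shows "minkowski_power n K \<subseteq> (\<lambda>x. real n *\<^sub>R x) ` (convex hull K)"
proof (induction n)
  case 0 then show ?case using assms hull_subset by (fastforce simp: mp_0)
next
  case (Suc n)
  show ?case
  proof
    fix x assume "x \<in> minkowski_power (Suc n) K"
    then obtain y k where yk: "y \<in> minkowski_power n K" "k \<in> K" "x = y + k" by (auto simp: mp_Suc)
    then obtain c where c: "c \<in> convex hull K" "y = real n *\<^sub>R c" using Suc by auto
    define c' where "c' = (real n / (real n + 1)) *\<^sub>R c + (1 / (real n + 1)) *\<^sub>R k"
    have "c' \<in> convex hull K" unfolding c'_def
      apply (rule convexD[OF convex_convex_hull])
      using c yk hull_inc by (auto simp: field_simps)
    moreover have "x = real (Suc n) *\<^sub>R c'" unfolding c'_def yk c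
      by (simp add: scaleR_add_right field_simps)
    ultimately show "x \<in> (\<lambda>x. real (Suc n) *\<^sub>R x) ` (convex hull K)" by blast
  qed
qed

lemma approx:
  fixes K :: "(real ^ 'm) set"
  assumes K: "bounded K" "0 \<in> K" "diameter K \<le> \<epsilon>"
    and p: "p \<in> convex hull (minkowski_power n K)"
  shows "\<exists>q\<in>minkowski_power n K. dist p q \<le> (real CARD('m) + 1) * \<epsilon>"
proof -
  have nK: "norm x \<le> \<epsilon>" if "x \<in> K" for x
  proof -
    have "dist x 0 \<le> diameter K" by (rule diameter_bounded_bound[OF K(1) that K(2)])
    then show ?thesis using K(3) by simp
  qed
  have eps: "0 \<le> \<epsilon>" using nK[OF K(2)] by simp
  have "convex hull (minkowski_power n K) \<subseteq> (\<lambda>x. real n *\<^sub>R x) ` (convex hull K)"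
    by (rule hull_minimal[OF mp_sub_hull]) (use K(2) in \<open>auto intro: convex_scaling\<close>)
  with p obtain c where c: "c \<in> convex hull K" "p = real n *\<^sub>R c" by auto
  then obtain S where S: "finite S" "S \<subseteq> K" "card S \<le> DIM(real^'m) + 1" "c \<in> convex hull S"
    unfolding caratheodory[of K] by auto
  then obtain u where u: "\<forall>x\<in>S. 0 \<le> u x" "sum u S = 1" "(\<Sum>x\<in>S. u x *\<^sub>R x) = c"
    unfolding convex_hull_finite[OF S(1)] by auto
  define a where "a x = nat \<lfloor>real n * u x\<rfloor>" for x
  have ra: "real (a x) = of_int \<lfloor>real n * u x\<rfloor>" if "x \<in> S" for x
    using u(1) that by (simp add: a_def)
  have fr: "0 \<le> real n * u x - real (a x) \<and> real n * u x - real (a x) \<le> 1" if "x \<in> S" for x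
    using ra[OF that] by linarith
  have "real (sum a S) = (\<Sum>x\<in>S. real (a x))" by simp
  also have "\<dots> \<le> (\<Sum>x\<in>S. real n * u x)" by (rule sum_mono) (use fr in auto)
  also have "\<dots> = real n" using u(2) by (simp add: sum_distrib_left[symmetric])
  finally have an: "sum a S \<le> n" by (simp del: of_nat_sum)
  define q where "q = (\<Sum>x\<in>S. real (a x) *\<^sub>R x)"
  have q: "q \<in> minkowski_power n K"
    unfolding q_def by (rule mp_mono[OF K(2) mp_sum[OF S(1) S(2)] an])
  have "p - q = (\<Sum>x\<in>S. (real n * u x - real (a x)) *\<^sub>R x)"
    unfolding c(2) q_def u(3)[symmetric]
    by (simp add: scaleR_sum_right sum_subtractf[symmetric] scaleR_diff_left)
  hence "dist p q = norm (\<Sum>x\<in>S. (real n * u x - real (a x)) *\<^sub>R x)"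
    by (simp add: dist_norm)
  also have "\<dots> \<le> (\<Sum>x\<in>S. norm ((real n * u x - real (a x)) *\<^sub>R x))"
    by (rule norm_sum)
  also have "\<dots> \<le> (\<Sum>x\<in>S. \<epsilon>)"
  proof (rule sum_mono)
    fix x assume x: "x \<in> S"
    have "norm ((real n * u x - real (a x)) *\<^sub>R x) = \<bar>real n * u x - real (a x)\<bar> * norm x" by simp
    also have "\<dots> \<le> 1 * \<epsilon>"
      apply (rule mult_mono) using fr[OF x] nK x S(2) eps by auto
    finally show "norm ((real n * u x - real (a x)) *\<^sub>R x) \<le> \<epsilon>" by simp
  qed
  also have "\<dots> = real (card S) * \<epsilon>" by simp
  also have "\<dots> \<le> (real CARD('m) + 1) * \<epsilon>"
    apply (rule mult_right_mono) using S(3) eps by auto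
  finally show ?thesis using q by blast
qed

lemma haus_nonneg:
  fixes X :: "'a::metric_space set" and Y :: "'b::metric_space set"
  assumes ne: "x0 \<in> X" "y0 \<in> Y" and bd: "bounded X" "bounded Y"
    and m: "metric_on (Inl ` X \<union> Inr ` Y) d"
    and dX: "\<forall>x\<in>X. \<forall>x'\<in>X. d (Inl x) (Inl x') = dist x x'"
    and dY: "\<forall>y\<in>Y. \<forall>y'\<in>Y. d (Inr y) (Inr y') = dist y y'"
  shows "0 \<le> hausdorff_dist_wrt d (Inl ` X) (Inr ` Y)"
proof -
  define M where "M = diameter X + d (Inl x0) (Inr y0) + diameter Y"
  have pos: "0 \<le> d a b" if "a \<in> Inl ` X \<union> Inr ` Y" "b \<in> Inl ` X \<union> Inr ` Y" for a b
    using m that unfolding metric_on_def by blast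
  have tri: "d a c \<le> d a b + d b c" if "a \<in> Inl ` X \<union> Inr ` Y" "b \<in> Inl ` X \<union> Inr ` Y"
     "c \<in> Inl ` X \<union> Inr ` Y" for a b c
    using m that unfolding metric_on_def by blast
  have bnd: "d (Inl x) (Inr y) \<le> M" if x: "x \<in> X" and y: "y \<in> Y" for x y
  proof -
    have "d (Inl x) (Inr y) \<le> d (Inl x) (Inl x0) + d (Inl x0) (Inr y)"
      using tri x y ne by blast
    also have "d (Inl x0) (Inr y) \<le> d (Inl x0) (Inr y0) + d (Inr y0) (Inr y)"
      using tri x y ne by blast
    also have "d (Inl x) (Inl x0) \<le> diameter X"
      using dX x ne diameter_bounded_bound[OF bd(1) x ne(1)] by simp
    also have "d (Inr y0) (Inr y) \<le> diameter Y"
      using dY y ne diameter_bounded_bound[OF bd(2) ne(2) y] by simp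
    finally show ?thesis unfolding M_def by simp
  qed
  have f0: "0 \<le> (INF b\<in>Inr ` Y. d a b)" if "a \<in> Inl ` X" for a
    by (rule cINF_greatest) (use ne that pos in auto)
  have fM: "(INF b\<in>Inr ` Y. d a b) \<le> M" if "a \<in> Inl ` X" for a
  proof -
    from that obtain x where x: "x \<in> X" "a = Inl x" by auto
    show ?thesis
      apply (rule cINF_lower2[of _ _ "Inr y0"])
        apply (rule bdd_belowI2[of _ 0]) using pos that apply blast
      using ne bnd x by auto
  qed
  have "0 \<le> (SUP a\<in>Inl ` X. INF b\<in>Inr ` Y. d a b)"
    apply (rule cSUP_upper2[of _ _ "Inl x0"])
      apply (rule bdd_aboveI2[of _ _ M]) using fM apply blast
    using ne f0 by auto
  then show ?thesis unfolding hausdorff_dist_wrt_def by linarith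
qed

theorem lemma2p2p5:
  fixes K :: "(real ^ 'm) set" and \<epsilon> :: real and n :: nat
  assumes "compact K"
    and "\<forall>x\<in>K. - x \<in> K"
    and "0 \<in> K"
    and "diameter K \<le> \<epsilon>"
  shows "GH_dist (minkowski_power n K) (convex hull (minkowski_power n K))
           \<le> (real CARD('m) + 1) * \<epsilon>"
proof -
  define X where "X = minkowski_power n K"
  define Y where "Y = convex hull X"
  define C where "C = (real CARD('m) + 1) * \<epsilon>"
  have bK: "bounded K" using assms(1) compact_imp_bounded by blast
  have eps: "0 \<le> \<epsilon>" using diameter_ge_0[OF bK] assms(4) by linarith
  have C0: "0 \<le> C" unfolding C_def using eps by simp
  have x0: "0 \<in> X" unfolding X_def by (rule mp_zero[OF assms(3)])
  have XY: "X \<subseteq> Y" unfolding Y_def by (rule hull_subset)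
  have bX: "bounded X"
  proof -
    have "X \<subseteq> (\<lambda>x. real n *\<^sub>R x) ` (convex hull K)"
      unfolding X_def by (rule mp_sub_hull) (use assms(3) in auto)
    moreover have "bounded ((\<lambda>x. real n *\<^sub>R x) ` (convex hull K))"
      by (rule bounded_scaling) (rule bounded_convex_hull[OF bK])
    ultimately show ?thesis using bounded_subset by blast
  qed
  have bY: "bounded Y" unfolding Y_def by (rule bounded_convex_hull[OF bX])
  have y0: "0 \<in> Y" using x0 XY by blast
  let ?S = "{d. metric_on (Inl ` X \<union> Inr ` Y) d \<and>
                          (\<forall>x\<in>X. \<forall>x'\<in>X. d (Inl x) (Inl x') = dist x x') \<and>
                          (\<forall>y\<in>Y. \<forall>y'\<in>Y. d (Inr y) (Inr y') = dist y y')}"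
  have bb: "bdd_below ((\<lambda>d. hausdorff_dist_wrt d (Inl ` X) (Inr ` Y)) ` ?S)"
    by (rule bdd_belowI2[of _ 0]) (use haus_nonneg[OF x0 y0 bX bY] in blast)
  have "GH_dist X Y \<le> C + \<delta>" if dpos: "0 < \<delta>" for \<delta>
  proof -
    define d where "d u v = dist (case_sum id id u) (case_sum id id v) + (if isl u = isl v then 0 else \<delta>)"
      for u v :: "(real ^ 'm) + (real ^ 'm)"
    have tri: "d u w \<le> d u v + d v w" for u v w
      using dist_triangle[of "case_sum id id u" "case_sum id id w" "case_sum id id v"] dpos
      unfolding d_def by (auto split: if_splits)
    have mo: "metric_on (Inl ` X \<union> Inr ` Y) d"
      unfolding metric_on_def
    proof (intro conjI ballI)
      fix u v assume "u \<in> Inl ` X \<union> Inr ` Y" "v \<in> Inl ` X \<union> Inr ` Y"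
      show "0 \<le> d u v" unfolding d_def using dpos by auto
      show "d u v = d v u" unfolding d_def by (auto simp: dist_commute)
      show "(d u v = 0) = (u = v)" unfolding d_def using dpos
        by (cases u; cases v) (auto simp: add_nonneg_eq_0_iff)
    next
      fix u v w show "d u w \<le> d u v + d v w" by (rule tri)
    qed
    have dS: "d \<in> ?S" using mo by (simp add: d_def)
    have H: "hausdorff_dist_wrt d (Inl ` X) (Inr ` Y) \<le> C + \<delta>"
      unfolding hausdorff_dist_wrt_def
    proof (rule max.boundedI)
      show "(SUP a\<in>Inl ` X. INF b\<in>Inr ` Y. d a b) \<le> C + \<delta>"
      proof (rule cSUP_least)
        show "Inl ` X \<noteq> {}" using x0 by blast
        fix a :: "(real^'m) + (real^'m)" assume "a \<in> Inl ` X"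
        then obtain x where x: "x \<in> X" "a = Inl x" by auto
        show "(INF b\<in>Inr ` Y. d a b) \<le> C + \<delta>"
          apply (rule cINF_lower2[of _ _ "Inr x"])
            apply (rule bdd_belowI2[of _ 0]) using dpos apply (simp add: d_def)
          using x XY C0 by (auto simp: d_def)
      qed
      show "(SUP b\<in>Inr ` Y. INF a\<in>Inl ` X. d a b) \<le> C + \<delta>"
      proof (rule cSUP_least)
        show "Inr ` Y \<noteq> {}" using y0 by blast
        fix b :: "(real^'m) + (real^'m)" assume "b \<in> Inr ` Y"
        then obtain y where y: "y \<in> Y" "b = Inr y" by auto
        then obtain q where q: "q \<in> X" "dist y q \<le> C"
          using approx[OF bK assms(3) assms(4), of y n] unfolding C_def Y_def X_def by blast
        show "(INF a\<in>Inl ` X. d a b) \<le> C + \<delta>"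
          apply (rule cINF_lower2[of _ _ "Inl q"])
            apply (rule bdd_belowI2[of _ 0]) using dpos apply (simp add: d_def)
          using q y by (auto simp: d_def dist_commute)
      qed
    qed
    have "GH_dist X Y \<le> hausdorff_dist_wrt d (Inl ` X) (Inr ` Y)"
      unfolding GH_dist_def by (rule cINF_lower[OF bb dS])
    with H show ?thesis by linarith
  qed
  then have "GH_dist X Y \<le> C" by (rule field_le_epsilon)
  then show ?thesis unfolding X_def Y_def C_def .
qed

end
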